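(* Let $m,n\ge 0$ be integers with $p=2m+n\ge 2$, and let $\Delta\ge 0$. Let $\mathcal{G}_\Delta$ be the family of simple graphs with maximum degree at most $\Delta$. Then $$\omega_{r(m,n)}(\mathcal{G}_\Delta)\le \left\lfloor \frac{p-1}{p}\Delta^2\right\rfloor+\Delta+1.$$ Equivalently: for every $(m,n)$-colored mixed graph $G$ whose underlying graph has maximum degree at most $\Delta$, every relative $(m,n)$-clique of $G$ has at most $\lfloor \frac{p-1}{p}\Delta^2\rfloor+\Delta+1$ vertices.
   Context: An $(m,n)$-colored mixed graph $G$ is obtained from a simple graph $U(G)$ (its underlying graph) by giving each edge either an orientation and one of $m$ arc colors $\{1,\dots,m\}$ (making it an arc) or leaving it unoriented with one of $n$ edge colors $\{1,\dots,n\}$. For adjacent $u,v$, the adjacency type of $uv$ is: "arc from $u$ to $v$ of color $i$", "arc from $v$ to $u$ of color $i$", or "edge of color $j$". Two pairs $uv$, $wx$ have the same adjacency type if both are arcs $u\to v$, $w\to x$ of the same color, or both arcs $v\to u$, $x\to w$ of the same color, or both edges of the same color. A colored homomorphism $f:G\to H$ between $(m,n)$-colored mixed graphs (both with simple underlying graphs) is a vertex map such that for every adjacent pair $uv$ of $G$, $f(u)f(v)$ is adjacent in $H$ with the same adjacency type as $uv$. A set $R\subseteq V(G)$ is a relative $(m,n)$-clique if for every pair of distinct $u,v\in R$ and every colored homomorphism $f:G\to H$, $f(u)\ne f(v)$. $\omega_{r(m,n)}(G)$ is the maximum size of a relative $(m,n)$-clique of $G$; for a simple graph $\Gamma$, $\omega_{r(m,n)}(\Gamma)$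 is the maximum of $\omega_{r(m,n)}(G)$ over all $(m,n)$-colored mixed graphs $G$ with $U(G)=\Gamma$; for a family $\mathcal{F}$, $\omega_{r(m,n)}(\mathcal{F})=\max_{\Gamma\in\mathcal{F}}\omega_{r(m,n)}(\Gamma)$. A 2-path $uvw$ in $U(G)$ is special if $uv$ and $vw$ do not have the same adjacency type (comparing $uv$ with $vw$, i.e. reading both in the direction $u\to v$, $v\to w$). It is known that two distinct vertices lie together in some relative clique (equivalently, cannot be identified by any colored homomorphism) iff they are adjacent or joined by a special 2-path. *)

theory Defs
  imports Complex_Main
begin

text \<open>Adjacency types of an ordered pair (u,v) of adjacent vertices:
  ArcTo i  = arc from u to v of colour i,
  ArcFrom i = arc from v to u of colour i,
  Edge j   = (unoriented) edge of colour j.\<close>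
datatype adjtype = ArcTo nat | ArcFrom nat | Edge nat

text \<open>An (m,n)-coloured mixed graph is given by a vertex set V and a map A with
  A u v = Some t iff u,v are adjacent and uv has adjacency type t
  (None iff non-adjacent).\<close>
definition mixed_graph :: "nat \<Rightarrow> nat \<Rightarrow> 'a set \<Rightarrow> ('a \<Rightarrow> 'a \<Rightarrow> adjtype option) \<Rightarrow> bool" where
  "mixed_graph m n V A \<longleftrightarrow>
     (\<forall>u v. A u v \<noteq> None \<longrightarrow> u \<in> V \<and> v \<in> V \<and> u \<noteq> v) \<and>
     (\<forall>u v i. A u v = Some (ArcTo i) \<longleftrightarrow> A v u = Some (ArcFrom i)) \<and>
     (\<forall>u v j. A u v = Some (Edge j) \<longrightarrow> A v u = Some (Edge j)) \<and>
     (\<forall>u v i. A u v = Some (ArcTo i) \<longrightarrow> 1 \<le> i \<and> i \<le> m) \<and>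
     (\<forall>u v j. A u v = Some (Edge j) \<longrightarrow> 1 \<le> j \<and> j \<le> n)"

definition colored_hom ::
  "'a set \<Rightarrow> ('a \<Rightarrow> 'a \<Rightarrow> adjtype option) \<Rightarrow> 'b set \<Rightarrow> ('b \<Rightarrow> 'b \<Rightarrow> adjtype option) \<Rightarrow> ('a \<Rightarrow> 'b) \<Rightarrow> bool" where
  "colored_hom V A W B f \<longleftrightarrow>
     (\<forall>u\<in>V. f u \<in> W) \<and> (\<forall>u v. A u v \<noteq> None \<longrightarrow> B (f u) (f v) = A u v)"

text \<open>Relative (m,n)-clique. Target graphs H range over (m,n)-coloured mixed graphs
  whose vertices are drawn from the same type as those of G.\<close>
definition relative_clique :: "nat \<Rightarrow> nat \<Rightarrow> 'a set \<Rightarrow> ('a \<Rightarrow> 'a \<Rightarrow> adjtype option) \<Rightarrow> 'a set \<Rightarrow> bool" where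
  "relative_clique m n V A R \<longleftrightarrow> R \<subseteq> V \<and>
     (\<forall>u\<in>R. \<forall>v\<in>R. u \<noteq> v \<longrightarrow>
        (\<forall>(W :: 'a set) B f. mixed_graph m n W B \<and> colored_hom V A W B f \<longrightarrow> f u \<noteq> f v))"

definition nbrs :: "('a \<Rightarrow> 'a \<Rightarrow> adjtype option) \<Rightarrow> 'a \<Rightarrow> 'a set" where
  "nbrs A u = {v. A u v \<noteq> None}"

definition max_degree_le :: "'a set \<Rightarrow> ('a \<Rightarrow> 'a \<Rightarrow> adjtype option) \<Rightarrow> nat \<Rightarrow> bool" where
  "max_degree_le V A D \<longleftrightarrow> (\<forall>u\<in>V. finite (nbrs A u) \<and> card (nbrs A u) \<le> D)"

end

theory Submission imports Defs begin

fun rev_t :: "adjtype \<Rightarrow> adjtype" where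
  "rev_t (ArcTo i) = ArcFrom i" | "rev_t (ArcFrom i) = ArcTo i" | "rev_t (Edge j) = Edge j"

lemma rev_t_rev_t[simp]: "rev_t (rev_t t) = t" by (cases t) auto
lemma map_rev_rev[simp]: "map_option rev_t (map_option rev_t x) = x" by (cases x) auto

lemma mg_parts:
  assumes "mixed_graph m n V A"
  shows mg_supp: "\<And>u v. A u v \<noteq> None \<Longrightarrow> u \<in> V \<and> v \<in> V \<and> u \<noteq> v"
    and mg_arc: "\<And>u v i. A u v = Some (ArcTo i) \<longleftrightarrow> A v u = Some (ArcFrom i)"
    and mg_edge: "\<And>u v j. A u v = Some (Edge j) \<Longrightarrow> A v u = Some (Edge j)"
    and mg_rA: "\<And>u v i. A u v = Some (ArcTo i) \<Longrightarrow> 1 \<le> i \<and> i \<le> m"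
    and mg_rE: "\<And>u v j. A u v = Some (Edge j) \<Longrightarrow> 1 \<le> j \<and> j \<le> n"
proof -
  have c: "(\<forall>u v. A u v \<noteq> None \<longrightarrow> u \<in> V \<and> v \<in> V \<and> u \<noteq> v) \<and>
     (\<forall>u v i. A u v = Some (ArcTo i) \<longleftrightarrow> A v u = Some (ArcFrom i)) \<and>
     (\<forall>u v j. A u v = Some (Edge j) \<longrightarrow> A v u = Some (Edge j)) \<and>
     (\<forall>u v i. A u v = Some (ArcTo i) \<longrightarrow> 1 \<le> i \<and> i \<le> m) \<and>
     (\<forall>u v j. A u v = Some (Edge j) \<longrightarrow> 1 \<le> j \<and> j \<le> n)"
    using assms unfolding mixed_graph_def .
  fix u v i j
  show "A u v \<noteq> None \<Longrightarrow> u \<in> V \<and> v \<in> V \<and> u \<noteq> v" using c by blast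
  show "A u v = Some (ArcTo i) \<longleftrightarrow> A v u = Some (ArcFrom i)" using c by blast
  show "A u v = Some (Edge j) \<Longrightarrow> A v u = Some (Edge j)" using c by blast
  show "A u v = Some (ArcTo i) \<Longrightarrow> 1 \<le> i \<and> i \<le> m" using c by blast
  show "A u v = Some (Edge j) \<Longrightarrow> 1 \<le> j \<and> j \<le> n" using c by blast
qed

lemma mg_sym:
  assumes mg: "mixed_graph m n V A" shows "A v u = map_option rev_t (A u v)"
proof (cases "A u v")
  case None
  show ?thesis
  proof (cases "A v u")
    case (Some t) then show ?thesis using None
    proof (cases t)
      case (ArcTo i) then show ?thesis using Some None mg_arc[OF mg, of v u i] by simp
    next
      case (ArcFrom i) then show ?thesis using Some None mg_arc[OF mg, of u v i] by simp
    next
      case (Edge j) then show ?thesis using Some None mg_edge[OF mg, of v u j] by simp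
    qed
  qed (simp add: None)
next
  case (Some t) then show ?thesis
  proof (cases t)
    case (ArcTo i) then show ?thesis using Some mg_arc[OF mg, of u v i] by simp
  next
    case (ArcFrom i) then show ?thesis using Some mg_arc[OF mg, of v u i] by simp
  next
    case (Edge j) then show ?thesis using Some mg_edge[OF mg, of u v j] by simp
  qed
qed

lemma mg_intro:
  assumes "\<And>u v. B u v \<noteq> None \<Longrightarrow> u \<in> W \<and> v \<in> W \<and> u \<noteq> v"
    and "\<And>u v. B v u = map_option rev_t (B u v)"
    and "\<And>u v i. B u v = Some (ArcTo i) \<Longrightarrow> 1 \<le> i \<and> i \<le> m"
    and "\<And>u v j. B u v = Some (Edge j) \<Longrightarrow> 1 \<le> j \<and> j \<le> n"
  shows "mixed_graph m n W B"
proof -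
  have a: "B u v = Some (ArcTo i) \<longleftrightarrow> B v u = Some (ArcFrom i)" for u v i
  proof
    assume "B u v = Some (ArcTo i)" then show "B v u = Some (ArcFrom i)" using assms(2)[where u=u and v=v] by simp
  next
    assume "B v u = Some (ArcFrom i)" then show "B u v = Some (ArcTo i)" using assms(2)[where u=v and v=u] by simp
  qed
  have b: "B u v = Some (Edge j) \<Longrightarrow> B v u = Some (Edge j)" for u v j
    using assms(2)[where u=u and v=v] by simp
  have c1: "\<forall>u v. B u v \<noteq> None \<longrightarrow> u \<in> W \<and> v \<in> W \<and> u \<noteq> v" using assms(1) by blast
  have c2: "\<forall>u v i. B u v = Some (ArcTo i) \<longleftrightarrow> B v u = Some (ArcFrom i)" using a by blast
  have c3: "\<forall>u v j. B u v = Some (Edge j) \<longrightarrow> B v u = Some (Edge j)" using b by blast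
  have c4: "\<forall>u v i. B u v = Some (ArcTo i) \<longrightarrow> 1 \<le> i \<and> i \<le> m" using assms(3) by blast
  have c5: "\<forall>u v j. B u v = Some (Edge j) \<longrightarrow> 1 \<le> j \<and> j \<le> n" using assms(4) by blast
  show ?thesis unfolding mixed_graph_def by (intro conjI c1 c2 c3 c4 c5)
qed

lemma key:
  assumes mg: "mixed_graph m n V A" and rc: "relative_clique m n V A R"
    and u: "u \<in> R" and w: "w \<in> R" and uw: "u \<noteq> w" and na: "A u w = None"
  shows "\<exists>v. A v u \<noteq> None \<and> A v w \<noteq> None \<and> A v u \<noteq> A v w"
proof (rule ccontr)
  assume "\<not> ?thesis"
  then have h: "\<And>v. A v u \<noteq> None \<Longrightarrow> A v w \<noteq> None \<Longrightarrow> A v u = A v w" by blast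
  have sym: "\<And>a b. A b a = map_option rev_t (A a b)" using mg_sym[OF mg] .
  have h2: "\<And>b. A u b \<noteq> None \<Longrightarrow> A w b \<noteq> None \<Longrightarrow> A u b = A w b"
  proof -
    fix b assume "A u b \<noteq> None" "A w b \<noteq> None"
    then have "A b u \<noteq> None" "A b w \<noteq> None" using sym[of u b] sym[of w b] by auto
    then have "A b u = A b w" using h by blast
    then have "map_option rev_t (A b u) = map_option rev_t (A b w)" by simp
    then show "A u b = A w b" using sym[of b u] sym[of b w] by (simp add: option.map_comp o_def option.map_ident)
  qed
  have RV: "R \<subseteq> V" using rc by (simp add: relative_clique_def)
  have nwu: "A w u = None" using sym[of u w] na by simp
  define f where "f = (\<lambda>z. if z = w then u else z)"
  define B where "B = (\<lambda>a b. if A a b \<noteq> None then A a b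
      else if a = u \<and> b \<noteq> u then A w b else if b = u \<and> a \<noteq> u then A a w else None)"
  have rA: "\<And>a b i. A a b = Some (ArcTo i) \<Longrightarrow> 1 \<le> i \<and> i \<le> m"
    using mg_rA[OF mg] .
  have rE: "\<And>a b i. A a b = Some (Edge i) \<Longrightarrow> 1 \<le> i \<and> i \<le> n"
    using mg_rE[OF mg] .
  have Vsupp: "\<And>a b. A a b \<noteq> None \<Longrightarrow> a \<in> V \<and> b \<in> V \<and> a \<noteq> b"
    using mg_supp[OF mg] .
  have Bc: "\<And>a b. B a b = A a b \<or> (a = u \<and> b \<noteq> u \<and> B a b = A w b) \<or> (b = u \<and> a \<noteq> u \<and> B a b = A a w) \<or> B a b = None"
    unfolding B_def by simp
  have uV: "u \<in> V" using RV u by blast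
  have mgB: "mixed_graph m n V B"
  proof (rule mg_intro)
    fix a b assume "B a b \<noteq> None" then show "a \<in> V \<and> b \<in> V \<and> a \<noteq> b"
      using Bc[of a b] Vsupp[of a b] Vsupp[of w b] Vsupp[of a w] uV by auto
  next
    fix a b show "B b a = map_option rev_t (B a b)"
    proof (cases "A a b = None")
      case False
      then have "A b a \<noteq> None" using sym[of a b] by simp
      then show ?thesis using False sym[of a b] unfolding B_def by (simp add: option.map_comp o_def option.map_ident)
    next
      case True
      then have n2: "A b a = None" using sym[of a b] by simp
      show ?thesis
      proof (cases "a = u \<and> b \<noteq> u")
        case True
        then show ?thesis using n2 \<open>A a b = None\<close> sym[of w b] unfolding B_def by simp
      next
        case c2: False
        show ?thesis
        proof (cases "b = u \<and> a \<noteq> u")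
          case True
          then show ?thesis using n2 \<open>A a b = None\<close> sym[of a w] unfolding B_def by simp
        next
          case False
          then show ?thesis using c2 n2 \<open>A a b = None\<close> unfolding B_def by auto
        qed
      qed
    qed
  next
    fix a b i assume "B a b = Some (ArcTo i)" then show "1 \<le> i \<and> i \<le> m"
      using Bc[of a b] rA[of a b i] rA[of w b i] rA[of a w i] by auto
  next
    fix a b j assume "B a b = Some (Edge j)" then show "1 \<le> j \<and> j \<le> n"
      using Bc[of a b] rE[of a b j] rE[of w b j] rE[of a w j] by auto
  qed
  have hom: "colored_hom V A V B f"
    unfolding colored_hom_def
  proof (intro conjI ballI allI impI)
    fix a assume "a \<in> V" then show "f a \<in> V" unfolding f_def using RV u by auto
  next
    fix a b assume ab: "A a b \<noteq> None"
    show "B (f a) (f b) = A a b"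
    proof (cases "a = w")
      case True
      then have "b \<noteq> w" "b \<noteq> u" using ab Vsupp[of a b] nwu by auto
      then show ?thesis using True ab h2[of b] unfolding f_def B_def by auto
    next
      case False
      note aw = False
      show ?thesis
      proof (cases "b = w")
        case True
        then have "a \<noteq> u" using ab na by auto
        then show ?thesis using True aw ab h[of a] sym[of a u] sym[of a w]
          unfolding f_def B_def by auto
      next
        case False
        then show ?thesis using aw ab unfolding f_def B_def by auto
      qed
    qed
  qed
  have rc1: "\<forall>u\<in>R. \<forall>v\<in>R. u \<noteq> v \<longrightarrow>
        (\<forall>(W :: 'a set) B f. mixed_graph m n W B \<and> colored_hom V A W B f \<longrightarrow> f u \<noteq> f v)"
    using rc by (simp add: relative_clique_def)
  have "\<forall>(W :: 'a set) B f. mixed_graph m n W B \<and> colored_hom V A W B f \<longrightarrow> f u \<noteq> f w"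
    using bspec[OF bspec[OF rc1 u] w] uw by simp
  then have "f u \<noteq> f w" using mgB hom by simp
  then show False unfolding f_def using uw by simp
qed


lemma cs_ineq:
  fixes b :: "'b \<Rightarrow> real"
  assumes "finite T"
  shows "(\<Sum>t\<in>T. b t)^2 \<le> real (card T) * (\<Sum>t\<in>T. (b t)^2)"
proof -
  have e1: "(\<Sum>s\<in>T. \<Sum>t\<in>T. (b s - b t)^2) = (\<Sum>s\<in>T. \<Sum>t\<in>T. (b s)^2) + (\<Sum>s\<in>T. \<Sum>t\<in>T. (b t)^2) - 2*(\<Sum>s\<in>T. \<Sum>t\<in>T. b s * b t)"
    by (simp add: power2_diff sum.distrib sum_subtractf sum_distrib_left mult.assoc)
  have e2: "(\<Sum>s\<in>T. \<Sum>t\<in>T. b s * b t) = (\<Sum>t\<in>T. b t)^2"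
    by (simp add: power2_eq_square sum_product)
  have e3: "(\<Sum>s\<in>T. \<Sum>t\<in>T. (b s)^2) = real (card T) * (\<Sum>t\<in>T. (b t)^2)"
    by (simp add: sum_distrib_left)
  have e4: "(\<Sum>s\<in>T. \<Sum>t\<in>T. (b t)^2) = real (card T) * (\<Sum>t\<in>T. (b t)^2)"
    by simp
  have "0 \<le> (\<Sum>s\<in>T. \<Sum>t\<in>T. (b s - b t)^2)" by (intro sum_nonneg) auto
  then show ?thesis unfolding e1 e2 e3 e4 by linarith
qed

lemma pair_bound:
  assumes S: "finite S" and T: "finite T" and ty: "ty ` S \<subseteq> T" and cT: "card T \<le> p"
  shows "real p * card {(x,y) \<in> S \<times> S. ty x \<noteq> ty y} \<le> (real p - 1) * (card S)^2"
proof -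
  define Bt where "Bt t = {x\<in>S. ty x = t}" for t
  define Eq where "Eq = {(x,y) \<in> S \<times> S. ty x = ty y}"
  define Ne where "Ne = {(x,y) \<in> S \<times> S. ty x \<noteq> ty y}"
  have fB: "\<And>t. finite (Bt t)" unfolding Bt_def using S by auto
  have u1: "S \<times> S = Eq \<union> Ne" unfolding Eq_def Ne_def by auto
  have u2: "Eq \<inter> Ne = {}" unfolding Eq_def Ne_def by auto
  have fE: "finite Eq" "finite Ne" unfolding Eq_def Ne_def using S
    by (auto intro: finite_subset[of _ "S \<times> S"])
  have "card (Eq \<union> Ne) = card Eq + card Ne" by (rule card_Un_disjoint) (use fE u2 in auto)
  then have c1: "card Eq + card Ne = card S * card S" using u1 card_cartesian_product[of S S] by metis
  have dj: "\<forall>i\<in>T. \<forall>j\<in>T. i \<noteq> j \<longrightarrow> Bt i \<inter> Bt j = {}" unfolding Bt_def by blast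
  have "Eq = (\<Union>t\<in>T. Bt t \<times> Bt t)" unfolding Eq_def Bt_def using ty by auto
  then have "card Eq = card (\<Union>t\<in>T. Bt t \<times> Bt t)" by simp
  also have "\<dots> = (\<Sum>t\<in>T. card (Bt t \<times> Bt t))"
    by (rule card_UN_disjoint) (use T fB dj in auto)
  finally have c2: "card Eq = (\<Sum>t\<in>T. card (Bt t) * card (Bt t))"
    by (simp add: card_cartesian_product)
  have "S = (\<Union>t\<in>T. Bt t)" unfolding Bt_def using ty by auto
  then have "card S = card (\<Union>t\<in>T. Bt t)" by simp
  also have "\<dots> = (\<Sum>t\<in>T. card (Bt t))"
    by (rule card_UN_disjoint) (use T fB dj in auto)
  finally have c3: "card S = (\<Sum>t\<in>T. card (Bt t))" .
  have "real (card S)^2 = (\<Sum>t\<in>T. real (card (Bt t)))^2" using c3 by simp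
  also have "\<dots> \<le> real (card T) * (\<Sum>t\<in>T. (real (card (Bt t)))^2)" by (rule cs_ineq[OF T])
  also have "\<dots> = real (card T) * card Eq" using c2 by (simp add: power2_eq_square)
  also have "\<dots> \<le> real p * card Eq" using cT by (intro mult_right_mono) auto
  finally have "real (card S)^2 \<le> real p * card Eq" .
  moreover have "real (card Eq) + card Ne = real (card S)^2" using c1
    by (metis of_nat_add of_nat_mult power2_eq_square)
  ultimately have "real p * card Ne \<le> real p * (card S)^2 - (card S)^2"
  proof -
    assume l1: "real (card S)^2 \<le> real p * card Eq" and l2: "real (card Eq) + card Ne = real (card S)^2"
    have "real (card Ne) = real (card S)^2 - card Eq" using l2 by linarith
    then have "real p * card Ne = real p * (card S)^2 - real p * card Eq" by (simp add: right_diff_distrib)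
    then show ?thesis using l1 by (simp only: of_nat_power)
  qed
  also have "\<dots> = (real p - 1) * (card S)^2" by (simp add: left_diff_distrib)
  finally show ?thesis unfolding Ne_def .
qed


lemma main_bound:
  fixes m n D :: nat and V :: "'a set" and A :: "'a \<Rightarrow> 'a \<Rightarrow> adjtype option" and R :: "'a set"
  assumes p2: "2 * m + n \<ge> 2"
    and fV: "finite V"
    and mg: "mixed_graph m n V A"
    and md: "max_degree_le V A D"
    and rc: "relative_clique m n V A R"
  shows "real (2*m+n) * (real (card R) * real (card R) - real (card R)) \<le>
      real (2*m+n) * (real (card R) * real D) + (real (2*m+n) - 1) * real D * (real (card R) * real D)"
proof -
  define p where "p = 2*m+n"
  have sym: "\<And>a b. A b a = map_option rev_t (A a b)" using mg_sym[OF mg] .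
  have RV: "R \<subseteq> V" using rc by (simp add: relative_clique_def)
  have fR: "finite R" using RV fV finite_subset by blast
  define r where "r = card R"
  have deg: "\<And>x. x \<in> V \<Longrightarrow> finite (nbrs A x) \<and> card (nbrs A x) \<le> D"
    using md unfolding max_degree_le_def by blast
  define T where "T = ArcTo ` {1..m} \<union> ArcFrom ` {1..m} \<union> Edge ` {1..n}"
  have fT: "finite T" unfolding T_def by simp
  have cT: "card T \<le> p"
  proof -
    have "card T \<le> card (ArcTo ` {1..m} \<union> ArcFrom ` {1..m}) + card (Edge ` {1..n})"
      unfolding T_def by (rule card_Un_le)
    also have "\<dots> \<le> card (ArcTo ` {1..m}) + card (ArcFrom ` {1..m}) + card (Edge ` {1..n})"
      using card_Un_le by (metis add_le_mono1)
    also have "\<dots> \<le> m + m + n"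
      by (intro add_mono card_image_le[THEN order_trans]) auto
    finally show ?thesis unfolding p_def by simp
  qed
  have tyT: "\<And>v x t. A v x = Some t \<Longrightarrow> t \<in> T"
  proof -
    fix v x t assume a: "A v x = Some t"
    show "t \<in> T"
    proof (cases t)
      case (ArcTo i) then show ?thesis using mg_rA[OF mg, of v x i] a unfolding T_def by auto
    next
      case (ArcFrom i)
      then have "A x v = Some (ArcTo i)" using mg_arc[OF mg, of x v i] a by simp
      then show ?thesis using mg_rA[OF mg, of x v i] ArcFrom unfolding T_def by auto
    next
      case (Edge j) then show ?thesis using mg_rE[OF mg, of v x j] a unfolding T_def by auto
    qed
  qed
  define S where "S v = {x \<in> R. A v x \<noteq> None}" for v
  define ty where "ty v x = the (A v x)" for v x
  define Ne where "Ne v = {(x,y) \<in> S v \<times> S v. ty v x \<noteq> ty v y}" for v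
  have fS: "\<And>v. finite (S v)" unfolding S_def using fR by simp
  have Ssub: "\<And>v. v \<in> V \<Longrightarrow> S v \<subseteq> nbrs A v" unfolding S_def nbrs_def by auto
  have cS: "\<And>v. v \<in> V \<Longrightarrow> card (S v) \<le> D"
    using Ssub deg card_mono le_trans by metis
  have tyS: "\<And>v. ty v ` S v \<subseteq> T" unfolding S_def ty_def using tyT by fastforce
  have pb: "\<And>v. real p * card (Ne v) \<le> (real p - 1) * (card (S v))^2"
    unfolding Ne_def by (rule pair_bound[OF fS fT tyS cT])
  have p1: "real p \<ge> 1" using p2 unfolding p_def by simp
  have pb2: "\<And>v. v \<in> V \<Longrightarrow> real p * card (Ne v) \<le> (real p - 1) * real D * card (S v)"
  proof -
    fix v assume v: "v \<in> V"
    have "real (card (S v)) * card (S v) \<le> real D * card (S v)"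
      using cS[OF v] by (intro mult_right_mono) auto
    then have "(real p - 1) * (real (card (S v)) * card (S v)) \<le> (real p - 1) * (real D * card (S v))"
      using p1 by (intro mult_left_mono) auto
    then show "real p * card (Ne v) \<le> (real p - 1) * real D * card (S v)"
      using pb[of v] by (simp add: power2_eq_square mult.assoc)
  qed
  define Adj where "Adj = Sigma R (\<lambda>x. {y \<in> R. A x y \<noteq> None})"
  have cAdj: "card Adj \<le> r * D"
  proof -
    have "card Adj = (\<Sum>x\<in>R. card {y \<in> R. A x y \<noteq> None})"
      unfolding Adj_def using fR by (simp add: card_SigmaI)
    also have "\<dots> \<le> (\<Sum>x\<in>R. D)"
    proof (rule sum_mono)
      fix x assume x: "x \<in> R"
      then have xV: "x \<in> V" using RV by blast
      have "{y \<in> R. A x y \<noteq> None} \<subseteq> nbrs A x" unfolding nbrs_def by auto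
      then show "card {y \<in> R. A x y \<noteq> None} \<le> D" using deg[OF xV] card_mono le_trans by metis
    qed
    finally show ?thesis unfolding r_def by simp
  qed
  define Pset where "Pset = {(x,y) \<in> R \<times> R. x \<noteq> y}"
  have Psub: "Pset \<subseteq> Adj \<union> (\<Union>v\<in>V. Ne v)"
  proof
    fix z assume z: "z \<in> Pset"
    then obtain x y where xy: "z = (x,y)" "x \<in> R" "y \<in> R" "x \<noteq> y" unfolding Pset_def by auto
    show "z \<in> Adj \<union> (\<Union>v\<in>V. Ne v)"
    proof (cases "A x y = None")
      case False then show ?thesis using xy unfolding Adj_def by auto
    next
      case True
      obtain v where v: "A v x \<noteq> None" "A v y \<noteq> None" "A v x \<noteq> A v y"
        using key[OF mg rc xy(2) xy(3) xy(4) True] by blast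
      have vV: "v \<in> V" using mg_supp[OF mg, of v x] v(1) by blast
      have "ty v x \<noteq> ty v y" unfolding ty_def using v by auto
      then have "z \<in> Ne v" unfolding Ne_def S_def using xy v by auto
      then show ?thesis using vV by blast
    qed
  qed
  have fNe: "\<And>v. finite (Ne v)" unfolding Ne_def using fS by (auto intro: finite_subset[of _ "S _ \<times> S _"])
  have cP1: "card Pset \<le> card Adj + (\<Sum>v\<in>V. card (Ne v))"
  proof -
    have fA: "finite Adj" unfolding Adj_def using fR by auto
    have fU: "finite (\<Union>v\<in>V. Ne v)" using fV fNe by auto
    have "card Pset \<le> card (Adj \<union> (\<Union>v\<in>V. Ne v))" using Psub fA fU by (intro card_mono) auto
    also have "\<dots> \<le> card Adj + card (\<Union>v\<in>V. Ne v)" by (rule card_Un_le)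
    also have "\<dots> \<le> card Adj + (\<Sum>v\<in>V. card (Ne v))" using card_UN_le[OF fV, of Ne] by simp
    finally show ?thesis .
  qed
  have cP: "card Pset + r = r * r"
  proof -
    have d: "R \<times> R = Pset \<union> (\<lambda>x. (x,x)) ` R" unfolding Pset_def by auto
    have dj: "Pset \<inter> (\<lambda>x. (x,x)) ` R = {}" unfolding Pset_def by auto
    have fP: "finite Pset" unfolding Pset_def using fR by (auto intro: finite_subset[of _ "R \<times> R"])
    have ci: "card ((\<lambda>x. (x,x)) ` R) = r" unfolding r_def by (rule card_image) (auto simp: inj_on_def)
    have "card (R \<times> R) = card Pset + card ((\<lambda>x. (x,x)) ` R)"
      unfolding d by (rule card_Un_disjoint) (use fP fR dj in auto)
    then show ?thesis using ci unfolding r_def by (simp add: card_cartesian_product)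
  qed
  have sumS: "(\<Sum>v\<in>V. card (S v)) \<le> r * D"
  proof -
    have "(\<Sum>v\<in>V. card (S v)) = card (Sigma V S)" using fV fS by (simp add: card_SigmaI)
    also have "Sigma V S = prod.swap ` Sigma R (\<lambda>x. {v \<in> V. A v x \<noteq> None})"
      unfolding S_def by force
    also have "card \<dots> = card (Sigma R (\<lambda>x. {v \<in> V. A v x \<noteq> None}))"
      by (rule card_image) (simp add: inj_on_def)
    also have "\<dots> = (\<Sum>x\<in>R. card {v \<in> V. A v x \<noteq> None})" using fR fV by (simp add: card_SigmaI)
    also have "\<dots> \<le> (\<Sum>x\<in>R. D)"
    proof (rule sum_mono)
      fix x assume x: "x \<in> R"
      then have xV: "x \<in> V" using RV by blast
      have "{v \<in> V. A v x \<noteq> None} \<subseteq> nbrs A x"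
      proof
        fix v assume "v \<in> {v \<in> V. A v x \<noteq> None}"
        then have "A v x \<noteq> None" by simp
        then show "v \<in> nbrs A x" unfolding nbrs_def using sym[where a=v and b=x] by simp
      qed
      then show "card {v \<in> V. A v x \<noteq> None} \<le> D" using deg[OF xV] card_mono le_trans by metis
    qed
    finally show ?thesis unfolding r_def by simp
  qed
  have "real p * (real r * real r - real r) = real p * real (card Pset)"
    using cP by (metis add_diff_cancel_right' of_nat_add of_nat_mult)
  also have "\<dots> \<le> real p * (real (card Adj) + (\<Sum>v\<in>V. real (card (Ne v))))"
  proof (rule mult_left_mono)
    have "real (card Pset) \<le> real (card Adj + (\<Sum>v\<in>V. card (Ne v)))"
      using cP1 by (simp only: of_nat_le_iff)
    then show "real (card Pset) \<le> real (card Adj) + (\<Sum>v\<in>V. real (card (Ne v)))"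
      by (simp add: of_nat_sum)
    show "0 \<le> real p" using p1 by simp
  qed
  also have "\<dots> = real p * card Adj + (\<Sum>v\<in>V. real p * card (Ne v))"
    by (simp add: algebra_simps sum_distrib_left)
  also have "\<dots> \<le> real p * (real r * real D) + (\<Sum>v\<in>V. (real p - 1) * real D * card (S v))"
  proof (intro add_mono sum_mono pb2)
    show "real p * real (card Adj) \<le> real p * (real r * real D)"
      using cAdj p1 by (intro mult_left_mono) (simp_all flip: of_nat_mult)
  qed
  also have "\<dots> = real p * (real r * real D) + (real p - 1) * real D * (\<Sum>v\<in>V. real (card (S v)))"
    by (simp add: sum_distrib_left)
  also have "\<dots> \<le> real p * (real r * real D) + (real p - 1) * real D * (real r * real D)"
  proof -
    have "(\<Sum>v\<in>V. real (card (S v))) \<le> real r * real D" using sumS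
      by (simp flip: of_nat_sum of_nat_mult)
    then show ?thesis using p1 by (intro add_left_mono mult_left_mono) auto
  qed
  finally show ?thesis unfolding p_def r_def .
qed


theorem mainTheorem1:
  fixes m n D :: nat and V :: "'a set" and A :: "'a \<Rightarrow> 'a \<Rightarrow> adjtype option" and R :: "'a set"
  assumes "2 * m + n \<ge> 2"
    and "finite V"
    and "mixed_graph m n V A"
    and "max_degree_le V A D"
    and "relative_clique m n V A R"
  shows "real (card R) \<le>
    of_int \<lfloor>real (2 * m + n - 1) / real (2 * m + n) * real D ^ 2\<rfloor> + real D + 1"
proof -
  have mb: "real (2*m+n) * (real (card R) * real (card R) - real (card R)) \<le>
      real (2*m+n) * (real (card R) * real D) + (real (2*m+n) - 1) * real D * (real (card R) * real D)"
    by (rule main_bound[OF assms])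
  define P where "P = real (2*m+n)"
  define r where "r = real (card R)"
  define d where "d = real D"
  have P1: "P \<ge> 1" unfolding P_def using assms(1) by simp
  have Pm: "real (2 * m + n - 1) = P - 1" unfolding P_def using assms(1) by (simp add: of_nat_diff)
  define X where "X = (P - 1) / P * d ^ 2"
  have X0: "X \<ge> 0" unfolding X_def using P1 by simp
  have key2: "r - 1 - d \<le> X"
  proof (cases "card R = 0")
    case True
    then have "r = 0" unfolding r_def by simp
    then show ?thesis using X0 unfolding d_def by simp
  next
    case False
    then have r0: "r > 0" unfolding r_def by simp
    have "r * (P * (r - 1)) \<le> r * (P * d + (P - 1) * d * d)"
      using mb unfolding P_def[symmetric] r_def[symmetric] d_def[symmetric]
      by (simp add: algebra_simps)
    then have "P * (r - 1) \<le> P * d + (P - 1) * d * d"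
      using r0 by (simp add: mult_le_cancel_left_pos)
    then have "P * (r - 1 - d) \<le> (P - 1) * d * d" by (simp add: algebra_simps)
    then have "r - 1 - d \<le> (P - 1) * d * d / P" using P1 by (simp add: pos_le_divide_eq mult.commute)
    then show ?thesis unfolding X_def by (simp add: power2_eq_square)
  qed
  have "int (card R) - 1 - int D \<le> \<lfloor>X\<rfloor>"
    using key2 unfolding r_def d_def by (simp add: le_floor_iff)
  then have "real_of_int (int (card R) - 1 - int D) \<le> real_of_int \<lfloor>X\<rfloor>" by linarith
  then have "real (card R) \<le> real_of_int \<lfloor>X\<rfloor> + real D + 1" by simp
  then show ?thesis unfolding X_def Pm d_def P_def by simp
qed

end
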